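(* Let $n>2$ be an integer, $a\in\mathbb{R}$ with $a\neq0$, and $b\in\{1,-1\}$. Put $\varphi=2\pi/n$, $p=\lfloor (n-1)/2\rfloor$, $q=\lfloor n/2\rfloor$, and for $c\in\mathbb{R}$ define \[\lambda_k(c)=c+2a\cos(k\varphi)\ (k=1,\dots,n-1),\quad \lambda_{\mathrm{sep}}(c)=c+2a,\quad \lambda_{\mathrm{lim}}(c)=c-2a,\] \[\lambda_\pm(c)=\tfrac12\Bigl(2a-(n-1)c\pm\sqrt{\bigl(2a+(n+1)c\bigr)^2+4n}\Bigr).\] Then: (a) for every $k=1,\dots,n-1$ and every $c$, $\lambda_{\mathrm{sep}}(c)>\lambda_k(c)$ if $a>0$, and $\lambda_{\mathrm{sep}}(c)<\lambda_k(c)$ if $a<0$; (b) $\lambda_k=\lambda_{n-k}$ for $k=1,\dots,p$; (c) the sequence $(\lambda_1,\dots,\lambda_q)$ is strictly decreasing if $a>0$ and strictly increasing if $a<0$; all $\lambda_k$ are bounded (below if $a>0$, above if $a<0$) by $\lambda_{\mathrm{lim}}=c-2a$, and for even $n$ one has $\lambda_q=\lambda_{n/2}=c-2a$; (d) for $a>0$ (resp. $a<0$) each curve $\lambda=\lambda_k(c)$ meets the curve $\lambda=\lambda_-(c)$ (resp. $\lambda=\lambda_+(c)$) at exactly one point $\mathsf C_k$, whose abscissa is \[c_k=\frac{4a^2\cos(k\varphi)\bigl(1-\cos(k\varphi)\bigr)+n}{2(n+1)a\bigl(\cos(k\varphi)-1\bigr)};\] as $k$ increases from $1$ to $q$, the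 $c_k$ form an increasing sequence if $a>0$ and a decreasing sequence if $a<0$.
   Context: The functions $\lambda_\pm(c)$ and $\lambda_k(c)$ are the eigenvalues of the $(n+1)\times(n+1)$ symmetric matrix $m_n(a,b,c)$ with $b^2=1$: rows/columns indexed $0,\dots,n$, $(0,0)$-entry $-nc$, $(0,j)$- and $(j,0)$-entries $b$ ($j=1,\dots,n$), lower-right block the circulant $\mathrm{circ}(c,a,0,\dots,0,a)$. *)

theory Defs
  imports Complex_Main
begin

definition phi :: "nat \<Rightarrow> real" where
  "phi n = 2 * pi / real n"

definition lam :: "nat \<Rightarrow> real \<Rightarrow> nat \<Rightarrow> real \<Rightarrow> real" where
  "lam n a k c = c + 2 * a * cos (real k * phi n)"

definition lam_sep :: "real \<Rightarrow> real \<Rightarrow> real" where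
  "lam_sep a c = c + 2 * a"

definition lam_lim :: "real \<Rightarrow> real \<Rightarrow> real" where
  "lam_lim a c = c - 2 * a"

definition lam_plus :: "nat \<Rightarrow> real \<Rightarrow> real \<Rightarrow> real" where
  "lam_plus n a c = (2 * a - (real n - 1) * c + sqrt ((2 * a + (real n + 1) * c)\<^sup>2 + 4 * real n)) / 2"

definition lam_minus :: "nat \<Rightarrow> real \<Rightarrow> real \<Rightarrow> real" where
  "lam_minus n a c = (2 * a - (real n - 1) * c - sqrt ((2 * a + (real n + 1) * c)\<^sup>2 + 4 * real n)) / 2"

definition ck :: "nat \<Rightarrow> real \<Rightarrow> nat \<Rightarrow> real" where
  "ck n a k = (4 * a\<^sup>2 * cos (real k * phi n) * (1 - cos (real k * phi n)) + real n)
              / (2 * (real n + 1) * a * (cos (real k * phi n) - 1))"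

end

theory Submission imports Defs begin

lemma cos_lt1: assumes "0 < t" "t < 2*pi" shows "cos t < 1"
proof -
  have "sin (t/2) > 0" using assms by (intro sin_gt_zero) auto
  moreover have "cos t = 1 - 2 * (sin (t/2))^2"
    using cos_double_sin[of "t/2"] by simp
  ultimately show ?thesis by (simp add: power2_eq_square)
qed

lemma sqrt_eqR: assumes "R \<ge> 0" "A = R^2" shows "sqrt A = R"
  using assms by simp

lemma inter_minus:
  fixes a x N c :: real assumes a: "a>0" and x: "x<1" and N: "N>0"
  shows "(c + 2*a*x = (2*a - (N-1)*c - sqrt((2*a+(N+1)*c)^2 + 4*N))/2) \<longleftrightarrow>
         c = (4*a^2*x*(1-x)+N)/(2*(N+1)*a*(x-1))"
proof -
  define R where "R = 2*a*(1-2*x) - (N+1)*c"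
  have e1: "(c + 2*a*x = (2*a - (N-1)*c - sqrt((2*a+(N+1)*c)^2 + 4*N))/2) \<longleftrightarrow>
      sqrt((2*a+(N+1)*c)^2 + 4*N) = R" unfolding R_def by (auto simp: algebra_simps)
  have d: "2*(N+1)*a*(x-1) \<noteq> 0" using a x N by auto
  have e2: "c = (4*a^2*x*(1-x)+N)/(2*(N+1)*a*(x-1)) \<longleftrightarrow> c * (2*(N+1)*a*(x-1)) = 4*a^2*x*(1-x)+N"
    using d by (simp add: field_simps)
  show ?thesis unfolding e1 e2
  proof
    assume h: "sqrt((2*a+(N+1)*c)^2 + 4*N) = R"
    have "(2*a+(N+1)*c)^2 + 4*N = R^2"
    proof -
      have "0 \<le> (2*a+(N+1)*c)^2 + 4*N" using N by (simp add: add_nonneg_nonneg)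
      then show ?thesis using h[symmetric] by simp
    qed
    then show "c * (2*(N+1)*a*(x-1)) = 4*a^2*x*(1-x)+N"
      unfolding R_def by (simp add: power2_eq_square algebra_simps) 
  next
    assume h: "c * (2*(N+1)*a*(x-1)) = 4*a^2*x*(1-x)+N"
    have p: "2*a*(1-x) > 0" using a x by simp
    have "R * (2*a*(1-x)) = 4*a^2*(1-x)^2 + N"
      unfolding R_def using h by (simp add: power2_eq_square algebra_simps)
    moreover have "4*a^2*(1-x)^2 + N > 0" using N by (simp add: add_nonneg_pos)
    ultimately have "R * (2*a*(1-x)) > 0" by simp
    then have R0: "R \<ge> 0" using p zero_less_mult_pos2 less_imp_le by blast
    have "(2*a+(N+1)*c)^2 + 4*N = R^2"
      unfolding R_def using h by (simp add: power2_eq_square algebra_simps)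
    then show "sqrt((2*a+(N+1)*c)^2 + 4*N) = R" using R0 by simp
  qed
qed

lemma inter_plus:
  fixes a x N c :: real assumes a: "a<0" and x: "x<1" and N: "N>0"
  shows "(c + 2*a*x = (2*a - (N-1)*c + sqrt((2*a+(N+1)*c)^2 + 4*N))/2) \<longleftrightarrow>
         c = (4*a^2*x*(1-x)+N)/(2*(N+1)*a*(x-1))"
proof -
  define R where "R = (N+1)*c - 2*a*(1-2*x)"
  have e1: "(c + 2*a*x = (2*a - (N-1)*c + sqrt((2*a+(N+1)*c)^2 + 4*N))/2) \<longleftrightarrow>
      sqrt((2*a+(N+1)*c)^2 + 4*N) = R" unfolding R_def by (auto simp: algebra_simps)
  have d: "2*(N+1)*a*(x-1) \<noteq> 0" using a x N by auto
  have e2: "c = (4*a^2*x*(1-x)+N)/(2*(N+1)*a*(x-1)) \<longleftrightarrow> c * (2*(N+1)*a*(x-1)) = 4*a^2*x*(1-x)+N"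
    using d by (simp add: field_simps)
  show ?thesis unfolding e1 e2
  proof
    assume h: "sqrt((2*a+(N+1)*c)^2 + 4*N) = R"
    have "(2*a+(N+1)*c)^2 + 4*N = R^2"
    proof -
      have "0 \<le> (2*a+(N+1)*c)^2 + 4*N" using N by (simp add: add_nonneg_nonneg)
      then show ?thesis using h[symmetric] by simp
    qed
    then show "c * (2*(N+1)*a*(x-1)) = 4*a^2*x*(1-x)+N"
      unfolding R_def by (simp add: power2_eq_square algebra_simps) 
  next
    assume h: "c * (2*(N+1)*a*(x-1)) = 4*a^2*x*(1-x)+N"
    have p: "2*(-a)*(1-x) > 0" using a x by (intro mult_pos_pos) auto
    have "R * (2*(-a)*(1-x)) = 4*a^2*(1-x)^2 + N"
      unfolding R_def using h by (simp add: power2_eq_square algebra_simps)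
    moreover have "4*a^2*(1-x)^2 + N > 0" using N by (simp add: add_nonneg_pos)
    ultimately have "R * (2*(-a)*(1-x)) > 0" by simp
    then have R0: "R \<ge> 0" using p zero_less_mult_pos2 less_imp_le by blast
    have "(2*a+(N+1)*c)^2 + 4*N = R^2"
      unfolding R_def using h by (simp add: power2_eq_square algebra_simps)
    then show "sqrt((2*a+(N+1)*c)^2 + 4*N) = R" using R0 by simp
  qed
qed

lemma ck_form:
  fixes a x N :: real assumes a: "a\<noteq>0" and x: "x<1" and N: "N>0"
  shows "(4*a^2*x*(1-x)+N)/(2*(N+1)*a*(x-1)) = - (4*a^2*x + N/(1-x)) / (2*(N+1)*a)"
proof -
  have "4*a^2*x + N/(1-x) = (4*a^2*x*(1-x)+N)/(1-x)" using x by (simp add: field_simps)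
  moreover have "2*(N+1)*a*(x-1) = - ((1-x) * (2*(N+1)*a))" by (simp add: algebra_simps)
  ultimately show ?thesis by (simp add: divide_divide_eq_left mult.commute)
qed

lemma ck_mono_pos:
  fixes a x y N :: real assumes a: "a>0" and x: "y<x" "x<1" and N: "N>0"
  shows "(4*a^2*x*(1-x)+N)/(2*(N+1)*a*(x-1)) < (4*a^2*y*(1-y)+N)/(2*(N+1)*a*(y-1))"
proof -
  have "N/(1-y) < N/(1-x)" using x N by (intro divide_strict_left_mono) auto
  moreover have "4*a^2*y < 4*a^2*x" using a x by simp
  ultimately have "4*a^2*y + N/(1-y) < 4*a^2*x + N/(1-x)" by simp
  moreover have "2*(N+1)*a > 0" using a N by simp
  ultimately have "- (4*a^2*x + N/(1-x)) / (2*(N+1)*a) < - (4*a^2*y + N/(1-y)) / (2*(N+1)*a)"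
    by (intro divide_strict_right_mono) auto
  then show ?thesis using a x N by (simp only: ck_form)
qed

lemma ck_mono_neg:
  fixes a x y N :: real assumes a: "a<0" and x: "y<x" "x<1" and N: "N>0"
  shows "(4*a^2*y*(1-y)+N)/(2*(N+1)*a*(y-1)) < (4*a^2*x*(1-x)+N)/(2*(N+1)*a*(x-1))"
proof -
  have "N/(1-y) < N/(1-x)" using x N by (intro divide_strict_left_mono) auto
  moreover have "4*a^2*y < 4*a^2*x" using a x by simp
  ultimately have "4*a^2*y + N/(1-y) < 4*a^2*x + N/(1-x)" by simp
  moreover have "2*(N+1)*(-a) > 0" using a N by (intro mult_pos_pos) auto
  ultimately have "(4*a^2*y + N/(1-y)) / (2*(N+1)*(-a)) < (4*a^2*x + N/(1-x)) / (2*(N+1)*(-a))"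
    by (intro divide_strict_right_mono) auto
  moreover have eq: "\<And>P. - P / (2*(N+1)*a) = P / (2*(N+1)*(-a))"
    by (simp only: mult_minus_right divide_minus_right minus_divide_left)
  ultimately have "- (4*a^2*y + N/(1-y)) / (2*(N+1)*a) < - (4*a^2*x + N/(1-x)) / (2*(N+1)*a)"
    by (simp only: eq)
  then show ?thesis using a x N by (simp only: ck_form)
qed

theorem lemma2:
  fixes n :: nat and a b :: real
  assumes "n > 2" and "a \<noteq> 0" and "b = 1 \<or> b = -1"
  shows
   "(\<forall>k\<in>{1..n-1}. \<forall>c.
        (a > 0 \<longrightarrow> lam_sep a c > lam n a k c) \<and> (a < 0 \<longrightarrow> lam_sep a c < lam n a k c))
    \<and> (\<forall>k\<in>{1..(n-1) div 2}. \<forall>c. lam n a k c = lam n a (n - k) c)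
    \<and> (a > 0 \<longrightarrow> (\<forall>c. \<forall>i j. 1 \<le> i \<longrightarrow> i < j \<longrightarrow> j \<le> n div 2 \<longrightarrow> lam n a j c < lam n a i c))
    \<and> (a < 0 \<longrightarrow> (\<forall>c. \<forall>i j. 1 \<le> i \<longrightarrow> i < j \<longrightarrow> j \<le> n div 2 \<longrightarrow> lam n a i c < lam n a j c))
    \<and> (\<forall>k\<in>{1..n-1}. \<forall>c.
        (a > 0 \<longrightarrow> lam_lim a c \<le> lam n a k c) \<and> (a < 0 \<longrightarrow> lam n a k c \<le> lam_lim a c))
    \<and> (even n \<longrightarrow> (\<forall>c. lam n a (n div 2) c = lam_lim a c))
    \<and> (\<forall>k\<in>{1..n-1}.
        (a > 0 \<longrightarrow> {c. lam n a k c = lam_minus n a c} = {ck n a k})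
      \<and> (a < 0 \<longrightarrow> {c. lam n a k c = lam_plus n a c} = {ck n a k}))
    \<and> (a > 0 \<longrightarrow> (\<forall>i j. 1 \<le> i \<longrightarrow> i < j \<longrightarrow> j \<le> n div 2 \<longrightarrow> ck n a i < ck n a j))
    \<and> (a < 0 \<longrightarrow> (\<forall>i j. 1 \<le> i \<longrightarrow> i < j \<longrightarrow> j \<le> n div 2 \<longrightarrow> ck n a j < ck n a i))"
proof -
  define N where "N = real n"
  have N: "N > 0" using assms(1) unfolding N_def by simp
  have phi: "phi n = 2*pi / N" unfolding phi_def N_def ..
  have kphi: "real k * phi n = 2*pi*real k / N" for k unfolding phi by simp
  have lt1: "cos (real k * phi n) < 1" if "k \<in> {1..n-1}" for k
  proof (rule cos_lt1)
    have "real k \<ge> 1" "real k < N" using that assms(1) unfolding N_def by auto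
    then show "0 < real k * phi n" "real k * phi n < 2*pi" unfolding kphi using N
      by (auto simp: field_simps)
  qed
  have mono: "cos (real j * phi n) < cos (real i * phi n)"
    if "1 \<le> i" "i < j" "j \<le> n div 2" for i j
  proof (rule cos_monotone_0_pi)
    have "real i \<ge> 1" "real i < real j" "2 * real j \<le> N" using that unfolding N_def by auto
    then show "0 \<le> real i * phi n" "real i * phi n < real j * phi n" "real j * phi n \<le> pi"
      unfolding kphi using N by (auto simp: field_simps)
  qed
  have jle: "j \<in> {1..n-1}" if "1 \<le> j" "j \<le> n div 2" for j using that assms(1) by auto
  have ineq: "n div 2 \<le> n - 1" using assms(1) by auto
  have sym: "cos (real (n-k) * phi n) = cos (real k * phi n)" if "k \<le> n" for k
  proof -
    have "real (n-k) * phi n = 2*pi - real k * phi n" using that N unfolding kphi N_def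
      by (simp add: of_nat_diff field_simps)
    then show ?thesis by (simp add: cos_diff)
  qed
  have evn: "cos (real (n div 2) * phi n) = -1" if "even n"
  proof -
    have "real (n div 2) * phi n = pi" using that N unfolding kphi N_def
      by (auto elim!: evenE simp: field_simps)
    then show ?thesis by simp
  qed
  have ckeq: "ck n a k = (4*a^2*cos (real k * phi n)*(1-cos (real k * phi n))+N)/(2*(N+1)*a*(cos (real k * phi n)-1))" for k
    unfolding ck_def N_def ..
  show ?thesis
  proof (intro conjI ballI allI impI)
    fix k c assume k: "k \<in> {1..n-1}"
    { assume "a > 0" then show "lam_sep a c > lam n a k c"
        using lt1[OF k] unfolding lam_sep_def lam_def by simp }
    { assume "a < 0" then show "lam_sep a c < lam n a k c"
        using lt1[OF k] unfolding lam_sep_def lam_def by (simp add: mult_less_cancel_left) }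
    have cm: "-1 \<le> cos (real k * phi n)" by simp
    { assume "a > 0" then have "a * (-1) \<le> a * cos (real k * phi n)"
        using cm by (intro mult_left_mono) auto
      then show "lam_lim a c \<le> lam n a k c"
        unfolding lam_lim_def lam_def by simp }
    { assume "a < 0" then have "a * cos (real k * phi n) \<le> a * (-1)"
        using cm by (intro mult_left_mono_neg) auto
      then show "lam n a k c \<le> lam_lim a c"
        unfolding lam_lim_def lam_def by simp }
  next
    fix k c assume k: "k \<in> {1..(n-1) div 2}"
    then have "k \<le> n" by auto
    then have "cos (real (n-k) * phi n) = cos (real k * phi n)" by (rule sym)
    then show "lam n a k c = lam n a (n - k) c" unfolding lam_def by simp
  next
    fix c i j assume "0 < a" "1 \<le> i" "i < j" "j \<le> n div 2"
    then show "lam n a j c < lam n a i c" using mono[of i j] unfolding lam_def by simp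
  next
    fix c i j assume "a < 0" "1 \<le> i" "i < j" "j \<le> n div 2"
    then show "lam n a i c < lam n a j c" using mono[of i j] unfolding lam_def
      by (simp add: mult_less_cancel_left)
  next
    fix c assume "even n" then show "lam n a (n div 2) c = lam_lim a c"
      using evn unfolding lam_def lam_lim_def by simp
  next
    fix k assume k: "k \<in> {1..n-1}" and a: "a > 0"
    show "{c. lam n a k c = lam_minus n a c} = {ck n a k}"
      using inter_minus[OF a lt1[OF k] N] unfolding lam_def lam_minus_def ckeq N_def
      by auto
  next
    fix k assume k: "k \<in> {1..n-1}" and a: "a < 0"
    show "{c. lam n a k c = lam_plus n a c} = {ck n a k}"
      using inter_plus[OF a lt1[OF k] N] unfolding lam_def lam_plus_def ckeq N_def
      by auto
  next
    fix i j assume a: "0 < a" and ij: "1 \<le> i" "i < j" "j \<le> n div 2"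
    have "i \<in> {1..n-1}" using ij jle by auto
    then show "ck n a i < ck n a j" unfolding ckeq
      using ck_mono_pos[OF a mono[OF ij] lt1 N] by (simp add: mult.assoc)
  next
    fix i j assume a: "a < 0" and ij: "1 \<le> i" "i < j" "j \<le> n div 2"
    have "i \<in> {1..n-1}" using ij jle by auto
    then show "ck n a j < ck n a i" unfolding ckeq
      using ck_mono_neg[OF a mono[OF ij] lt1 N] by (simp add: mult.assoc)
  qed
qed

end
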